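(* Let $X$ be a Banach algebra with unit element $\mathbf{1}$. Suppose $h:X\to X$ satisfies $$\|h(xyx)-h(x)yx-xh(y)x-xyh(x)\|\le\theta(\|x\|^p+\|y\|^q+\|x\|^r\|y\|^s),$$ $$\|h(x+y)-h(x)-h(y)\|\le\theta(\|x\|^p+\|y\|^q+\|x\|^r\|y\|^s)$$ for all $x,y\in X$, for some constants $\theta,p,q,r,s\in(0,1)$ with $r+s<1$. Then $h$ is a Jordan triple derivation.
   Context: A Jordan triple derivation on an algebra $X$ is an additive map $D:X\to X$ with $D(xyx)=D(x)yx+xD(y)x+xyD(x)$ for all $x,y\in X$. *)

theory Defs
  imports "HOL-Analysis.Analysis"
begin

definition additive_map :: "('a::plus \<Rightarrow> 'a) \<Rightarrow> bool" where
  "additive_map D \<longleftrightarrow> (\<forall>x y. D (x + y) = D x + D y)"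

definition jordan_triple_derivation :: "('a::ring \<Rightarrow> 'a) \<Rightarrow> bool" where
  "jordan_triple_derivation D \<longleftrightarrow> additive_map D \<and>
     (\<forall>x y. D (x * y * x) = D x * y * x + x * D y * x + x * y * D x)"

end

theory Submission
  imports Defs
begin

lemma vanish:
  fixes e a b c C \<alpha> \<beta> \<gamma> :: real
  assumes "\<alpha> < 2" "\<beta> < 2" "\<gamma> < 2"
  assumes H: "\<And>n::nat. n \<ge> 1 \<Longrightarrow> real n ^ 2 * e \<le> a * real n powr \<alpha> + b * real n powr \<beta> + c * real n powr \<gamma> + C * real n"
  shows "e \<le> 0"
proof -
  let ?f = "\<lambda>n::nat. a * real n powr (\<alpha>-2) + b * real n powr (\<beta>-2) + c * real n powr (\<gamma>-2) + C * real n powr (1-2)"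
  have L: "\<And>d x. d < 2 \<Longrightarrow> (\<lambda>n::nat. x * real n powr (d-2)) \<longlonglongrightarrow> 0"
  proof -
    fix d x :: real assume "d < 2"
    then have "(\<lambda>n::nat. real n powr (d-2)) \<longlonglongrightarrow> 0"
      by (intro tendsto_neg_powr filterlim_real_sequentially) simp
    then show "(\<lambda>n::nat. x * real n powr (d-2)) \<longlonglongrightarrow> 0"
      using tendsto_mult_right_zero by blast
  qed
  have "?f \<longlonglongrightarrow> 0 + 0 + 0 + 0"
    by (intro tendsto_add L) (use assms in auto)
  moreover have "\<forall>n\<ge>1. e \<le> ?f n"
  proof (intro allI impI)
    fix n :: nat assume n: "n \<ge> 1"
    then have pos: "real n > 0" by simp
    have sq: "real n powr 2 = real n ^ 2" using powr_realpow[OF pos, of 2] by simp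
    have d: "\<And>d. real n powr (d - 2) = real n powr d / real n ^ 2"
      using powr_diff sq by metis
    have one: "real n powr 1 = real n" using pos by simp
    have "e = (real n ^ 2 * e) / real n ^ 2" using pos by simp
    also have "\<dots> \<le> (a * real n powr \<alpha> + b * real n powr \<beta> + c * real n powr \<gamma> + C * real n) / real n ^ 2"
      by (rule divide_right_mono[OF H[OF n]]) simp
    also have "\<dots> = ?f n" unfolding d one by (simp add: add_divide_distrib)
    finally show "e \<le> ?f n" .
  qed
  ultimately show ?thesis by (intro LIMSEQ_le_const[of ?f 0 e]) auto
qed

lemma tri4: "norm (a - b + c + d) \<le> norm a + norm b + norm c + norm (d::'a::real_normed_vector)"
proof -
  have "norm (a-b+c+d) \<le> norm (a-b+c) + norm d" by (rule norm_triangle_ineq)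
  also have "\<dots> \<le> norm (a-b) + norm c + norm d" using norm_triangle_ineq[of "a-b" c] by simp
  also have "\<dots> \<le> norm a + norm b + norm c + norm d" using norm_triangle_ineq4[of a b] by simp
  finally show ?thesis .
qed

lemma ofreal_sandwich:
  fixes w :: "'a::real_normed_algebra_1"
  shows "of_real t * w * of_real t = (t*t) *\<^sub>R w"
  by (simp add: of_real_def)

lemma powr_sq_mult:
  fixes t u p :: real
  assumes "t \<ge> 0" "u \<ge> 0"
  shows "(t*t*u) powr p = t powr (p+p) * u powr p"
  by (simp only: powr_mult powr_add)

theorem corollary2p4:
  fixes h :: "'a::{real_normed_algebra_1, banach} \<Rightarrow> 'a"
    and \<theta> p q r s :: real
  assumes "0 < \<theta>" "\<theta> < 1" "0 < p" "p < 1" "0 < q" "q < 1"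
    "0 < r" "r < 1" "0 < s" "s < 1" "r + s < 1"
  assumes A1: "\<And>x y. norm (h (x * y * x) - h x * y * x - x * h y * x - x * y * h x)
      \<le> \<theta> * (norm x powr p + norm y powr q + norm x powr r * norm y powr s)"
  assumes A2: "\<And>x y. norm (h (x + y) - h x - h y)
      \<le> \<theta> * (norm x powr p + norm y powr q + norm x powr r * norm y powr s)"
  shows "jordan_triple_derivation h"
proof -
  define E where "E t w = h (of_real t * w * of_real t) - h (of_real t) * w * of_real t
      - of_real t * h w * of_real t - of_real t * w * h (of_real t)" for t :: real and w :: 'a
  define M where "M w = \<theta> * (1 + norm w powr q + norm w powr s)" for w :: 'a
  have Eb: "norm (E t w) \<le> M w * t" if t: "t \<ge> 1" for t w
  proof -
    have "norm (E t w) \<le> \<theta> * (t powr p + norm w powr q + t powr r * norm w powr s)"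
      using A1[of "of_real t" w] t unfolding E_def by simp
    also have "\<dots> \<le> \<theta> * (t + norm w powr q * t + t * norm w powr s)"
    proof -
      have "t powr p \<le> t powr 1" by (rule powr_mono) (use assms t in auto)
      moreover have "t powr r \<le> t powr 1" by (rule powr_mono) (use assms t in auto)
      moreover have "norm w powr q \<le> norm w powr q * t" using t mult_left_mono[of 1 t "norm w powr q"] by simp
      ultimately show ?thesis using t assms
        by (intro mult_left_mono add_mono mult_right_mono) auto
    qed
    also have "\<dots> = M w * t" unfolding M_def by (simp add: algebra_simps)
    finally show ?thesis .
  qed
  have add: "h (y + z) = h y + h z" for y z
  proof -
    define G where "G = h (y + z) - h y - h z"
    have "norm G \<le> 0"
    proof (rule vanish[where \<alpha>="p+p" and \<beta>="q+q" and \<gamma>="r+r+(s+s)"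
        and a="\<theta> * norm y powr p" and b="\<theta> * norm z powr q"
        and c="\<theta> * (norm y powr r * norm z powr s)" and C="M (y+z) + M y + M z"])
      show "p + p < 2" "q + q < 2" "r + r + (s + s) < 2" using assms by auto
      fix n :: nat assume n: "n \<ge> 1"
      define t where "t = real n"
      have t: "t \<ge> 1" using n by (simp add: t_def)
      have Id: "(t*t) *\<^sub>R G = (h ((t*t) *\<^sub>R y + (t*t) *\<^sub>R z) - h ((t*t) *\<^sub>R y) - h ((t*t) *\<^sub>R z))
           - E t (y+z) + E t y + E t z"
        unfolding E_def G_def ofreal_sandwich by (simp add: algebra_simps)
      have N: "norm (h ((t*t) *\<^sub>R y + (t*t) *\<^sub>R z) - h ((t*t) *\<^sub>R y) - h ((t*t) *\<^sub>R z))
          \<le> \<theta> * norm y powr p * t powr (p+p) + \<theta> * norm z powr q * t powr (q+q)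
             + \<theta> * (norm y powr r * norm z powr s) * t powr (r+r+(s+s))"
      proof -
        have "norm (h ((t*t) *\<^sub>R y + (t*t) *\<^sub>R z) - h ((t*t) *\<^sub>R y) - h ((t*t) *\<^sub>R z))
           \<le> \<theta> * ((t*t*norm y) powr p + (t*t*norm z) powr q + (t*t*norm y) powr r * (t*t*norm z) powr s)"
          using A2[of "(t*t) *\<^sub>R y" "(t*t) *\<^sub>R z"] t by simp
        also have "\<dots> = \<theta> * norm y powr p * t powr (p+p) + \<theta> * norm z powr q * t powr (q+q)
             + \<theta> * (norm y powr r * norm z powr s) * t powr (r+r+(s+s))"
        proof -
          have t0: "t \<ge> 0" using t by simp
          show ?thesis
            unfolding powr_sq_mult[OF t0 norm_ge_zero] powr_add[of t "r+r" "s+s"]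
            by (simp only: mult_ac distrib_left)
        qed
        finally show ?thesis .
      qed
      have "t^2 * norm G = norm ((t*t) *\<^sub>R G)" using t by (simp add: power2_eq_square)
      also have "\<dots> \<le> norm (h ((t*t) *\<^sub>R y + (t*t) *\<^sub>R z) - h ((t*t) *\<^sub>R y) - h ((t*t) *\<^sub>R z))
           + norm (E t (y+z)) + norm (E t y) + norm (E t z)"
        unfolding Id by (rule tri4)
      also have "\<dots> \<le> (\<theta> * norm y powr p * t powr (p+p) + \<theta> * norm z powr q * t powr (q+q)
             + \<theta> * (norm y powr r * norm z powr s) * t powr (r+r+(s+s)))
           + M (y+z) * t + M y * t + M z * t"
        using N Eb[OF t] by (intro add_mono) auto
      finally show "real n ^ 2 * norm G \<le> \<theta> * norm y powr p * real n powr (p + p) +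
          \<theta> * norm z powr q * real n powr (q + q) +
          \<theta> * (norm y powr r * norm z powr s) * real n powr (r + r + (s + s)) +
          (M (y + z) + M y + M z) * real n"
        unfolding t_def by (simp add: algebra_simps)
    qed
    then show ?thesis unfolding G_def by (simp add: algebra_simps)
  qed
  have h0: "h 0 = 0" using add[of 0 0] by simp
  have hs: "h (real k *\<^sub>R x) = real k *\<^sub>R h x" for k x
    by (induction k) (simp_all add: h0 scaleR_add_left add)
  have jor: "h (x * y * x) = h x * y * x + x * h y * x + x * y * h x" for x y
  proof -
    define J where "J = h (x * y * x) - h x * y * x - x * h y * x - x * y * h x"
    have "norm J \<le> 0"
    proof (rule vanish[where \<alpha>="p" and \<beta>="0" and \<gamma>="r"
        and a="\<theta> * norm x powr p" and b="\<theta> * norm y powr q"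
        and c="\<theta> * (norm x powr r * norm y powr s)" and C="0"])
      show "p < 2" "0 < (2::real)" "r < 2" using assms by auto
      fix n :: nat assume n: "n \<ge> 1"
      define t where "t = real n"
      have t: "t \<ge> 1" using n by (simp add: t_def)
      define x' where "x' = t *\<^sub>R x"
      have e1: "x' * y * x' = real (n*n) *\<^sub>R (x * y * x)" unfolding x'_def t_def by simp
      have e2: "h x' = t *\<^sub>R h x" unfolding x'_def t_def by (rule hs)
      have Id: "h (x' * y * x') - h x' * y * x' - x' * h y * x' - x' * y * h x' = (t*t) *\<^sub>R J"
        unfolding e1 e2 hs J_def unfolding x'_def t_def by (simp add: algebra_simps)
      have "t^2 * norm J = norm ((t*t) *\<^sub>R J)" using t by (simp add: power2_eq_square)
      also have "\<dots> \<le> \<theta> * (norm x' powr p + norm y powr q + norm x' powr r * norm y powr s)"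
        unfolding Id[symmetric] by (rule A1)
      also have "\<dots> = \<theta> * norm x powr p * t powr p + \<theta> * norm y powr q * t powr 0
          + \<theta> * (norm x powr r * norm y powr s) * t powr r + 0 * t"
        unfolding x'_def using t by (simp add: powr_mult algebra_simps)
      finally show "real n ^ 2 * norm J \<le> \<theta> * norm x powr p * real n powr p +
          \<theta> * norm y powr q * real n powr 0 +
          \<theta> * (norm x powr r * norm y powr s) * real n powr r + 0 * real n"
        unfolding t_def .
    qed
    then show ?thesis unfolding J_def by (simp add: algebra_simps)
  qed
  show ?thesis unfolding jordan_triple_derivation_def additive_map_def
    using add jor by blast
qed

end
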